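(* For every even positive integer $n$, $d(L(n,2n-1)) = n^2 - n$. More precisely, there is a partial coloring of an $n\times n$ square with exactly $n^2-n$ colored entries (all off-diagonal entries colored, all diagonal entries uncolored) that uniquely extends to $L(n,2n-1)$, and no partial coloring with more than $n$ uncolored entries uniquely extends to $L(n,2n-1)$.
   Context: For positive integers $n,k$, let $\mathcal{L}_{n,k}$ be the set of $n\times n$ squares all of whose entries are colored with colors from a fixed set of $k$ colors $\{1,\dots,k\}$ such that any two entries in the same row, or in the same column, have different colors. A partial coloring of an $n\times n$ square assigns colors from $\{1,\dots,k\}$ to some of its entries; the remaining entries are called uncolored. A partial coloring extends to $L(n,k)$ if the uncolored entries can be colored so that the resulting fully colored square lies in $\mathcal{L}_{n,k}$ (keeping the given colors), and it uniquely extends to $L(n,k)$ if there is exactly one such way. A defining set of the $k$-coloring of an $n\times n$ square is the set of colored entries of a partial coloring that uniquely extends to $L(n,k)$; the defining number $d(L(n,k))$ is the minimum cardinality of such a defining set. *)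

theory Defs
  imports Main
begin

definition square :: "nat \<Rightarrow> (nat \<times> nat) set" where
  "square n = {(i, j). i < n \<and> j < n}"

definition in_L :: "nat \<Rightarrow> nat \<Rightarrow> (nat \<times> nat \<Rightarrow> nat) \<Rightarrow> bool" where
  "in_L n k f \<longleftrightarrow>
     (\<forall>e\<in>square n. f e \<in> {1..k}) \<and>
     (\<forall>i<n. \<forall>j<n. \<forall>j'<n. j \<noteq> j' \<longrightarrow> f (i, j) \<noteq> f (i, j')) \<and>
     (\<forall>j<n. \<forall>i<n. \<forall>i'<n. i \<noteq> i' \<longrightarrow> f (i, j) \<noteq> f (i', j))"

definition partial_coloring :: "nat \<Rightarrow> nat \<Rightarrow> (nat \<times> nat \<Rightarrow> nat option) \<Rightarrow> bool" where
  "partial_coloring n k p \<longleftrightarrow> dom p \<subseteq> square n \<and> ran p \<subseteq> {1..k}"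

definition is_extension :: "nat \<Rightarrow> nat \<Rightarrow> (nat \<times> nat \<Rightarrow> nat option) \<Rightarrow> (nat \<times> nat \<Rightarrow> nat) \<Rightarrow> bool" where
  "is_extension n k p f \<longleftrightarrow> in_L n k f \<and> (\<forall>e\<in>dom p. p e = Some (f e))"

definition extends :: "nat \<Rightarrow> nat \<Rightarrow> (nat \<times> nat \<Rightarrow> nat option) \<Rightarrow> bool" where
  "extends n k p \<longleftrightarrow> (\<exists>f. is_extension n k p f)"

definition uniquely_extends :: "nat \<Rightarrow> nat \<Rightarrow> (nat \<times> nat \<Rightarrow> nat option) \<Rightarrow> bool" where
  "uniquely_extends n k p \<longleftrightarrow>
     (\<exists>f. is_extension n k p f \<and>
        (\<forall>g. is_extension n k p g \<longrightarrow> (\<forall>e\<in>square n. g e = f e)))"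

definition defining_number :: "nat \<Rightarrow> nat \<Rightarrow> nat" where
  "defining_number n k =
     Min ((\<lambda>p. card (dom p)) ` {p. partial_coloring n k p \<and> uniquely_extends n k p})"

end

theory Submission
  imports Defs
begin


lemma diff_ext:
  assumes "is_extension n k p f" "is_extension n k p g" "e \<in> square n" "g e \<noteq> f e"
  shows "\<not> uniquely_extends n k p"
  using assms unfolding uniquely_extends_def by metis

lemma recolor:
  assumes ext: "is_extension n k p f" and ij: "i < n" "j < n" "(i,j) \<notin> dom p"
    and r: "r < n" "r \<noteq> i" and j': "j' < n" "j' \<noteq> j" and eq: "f (r,j) = f (i,j')"
    and kk: "2*n - 1 \<le> k"
  shows "\<not> uniquely_extends n k p"
proof -
  have L: "in_L n k f" using ext by (simp add: is_extension_def)
  define S where "S = f ` ({i} \<times> {..<n}) \<union> f ` (({..<n} - {i, r}) \<times> {j})"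
  have fA: "finite ({i} \<times> {..<n})" by simp
  have fB: "finite (({..<n} - {i, r}) \<times> {j})" by simp
  have fS: "finite S" unfolding S_def using fA fB by simp
  have c1: "card (f ` ({i} \<times> {..<n})) \<le> n"
  proof -
    have "card ({i} \<times> {..<n}) = n" by (simp add: card_cartesian_product)
    then show ?thesis using card_image_le[OF fA, of f] by simp
  qed
  have c2: "card (f ` (({..<n} - {i, r}) \<times> {j})) \<le> n - 2"
  proof -
    have "card ({..<n} - {i, r}) = n - 2"
      using ij r by (subst card_Diff_subset) auto
    then have "card (({..<n} - {i, r}) \<times> {j}) = n - 2"
      by (simp add: card_cartesian_product)
    then show ?thesis using card_image_le[OF fB, of f] by simp
  qed
  have "card S \<le> n + (n - 2)" unfolding S_def
    using c1 c2 card_Un_le[of "f ` ({i} \<times> {..<n})" "f ` (({..<n} - {i, r}) \<times> {j})"] by linarith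
  then have "card S < card {1..k}" using kk r ij by auto
  then have "\<not> {1..k} \<subseteq> S"
    using card_mono[OF fS, of "{1..k}"] by linarith
  then obtain v where v: "v \<in> {1..k}" "v \<notin> S" by blast
  have rowv: "\<forall>j''<n. v \<noteq> f (i, j'')" using v unfolding S_def by auto
  have colv: "\<forall>r'<n. r' \<noteq> i \<longrightarrow> v \<noteq> f (r', j)"
  proof (intro allI impI)
    fix r' assume "r' < n" "r' \<noteq> i"
    show "v \<noteq> f (r', j)"
    proof (cases "r' = r")
      case True then show ?thesis using rowv eq j' by auto
    next
      case False then show ?thesis using v \<open>r' < n\<close> \<open>r' \<noteq> i\<close> unfolding S_def by auto
    qed
  qed
  define g where "g = f((i,j) := v)"
  have "is_extension n k p g"
    unfolding is_extension_def
  proof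
    have a: "\<forall>e\<in>square n. g e \<in> {1..k}" using L v unfolding g_def in_L_def by auto
    have b: "\<forall>i'<n. \<forall>j1<n. \<forall>j2<n. j1 \<noteq> j2 \<longrightarrow> g (i', j1) \<noteq> g (i', j2)"
    proof (intro allI impI)
      fix i' j1 j2 assume h: "i' < n" "j1 < n" "j2 < n" "j1 \<noteq> j2"
      show "g (i', j1) \<noteq> g (i', j2)"
        using L h rowv unfolding g_def in_L_def by (cases "i' = i"; cases "j1 = j"; cases "j2 = j"; simp; metis)
    qed
    have c: "\<forall>j'<n. \<forall>i1<n. \<forall>i2<n. i1 \<noteq> i2 \<longrightarrow> g (i1, j') \<noteq> g (i2, j')"
    proof (intro allI impI)
      fix j'' i1 i2 assume h: "j'' < n" "i1 < n" "i2 < n" "i1 \<noteq> i2"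
      show "g (i1, j'') \<noteq> g (i2, j'')"
        using L h colv unfolding g_def in_L_def by (cases "j'' = j"; cases "i1 = i"; cases "i2 = i"; simp; metis)
    qed
    show "in_L n k g" using a b c unfolding in_L_def by blast
    show "\<forall>e\<in>dom p. p e = Some (g e)" using ext ij unfolding is_extension_def g_def by auto
  qed
  moreover have "g (i,j) \<noteq> f (i,j)" using rowv ij unfolding g_def by auto
  ultimately show ?thesis using diff_ext ext ij by (auto simp: square_def)
qed

lemma swap:
  assumes ext: "is_extension n k p f" and ij: "i < n" "j < n" "(i,j) \<notin> dom p"
    and j': "j' < n" "j' \<noteq> j" "(i,j') \<notin> dom p"
    and n1: "\<forall>r<n. r \<noteq> i \<longrightarrow> f (r,j) \<noteq> f (i,j')"
    and n2: "\<forall>r<n. r \<noteq> i \<longrightarrow> f (r,j') \<noteq> f (i,j)"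
  shows "\<not> uniquely_extends n k p"
proof -
  have L: "in_L n k f" using ext by (simp add: is_extension_def)
  have dif: "f (i,j) \<noteq> f (i,j')" using L ij j' unfolding in_L_def by blast
  define g where "g = f((i,j) := f (i,j'), (i,j') := f (i,j))"
  have "is_extension n k p g"
    unfolding is_extension_def
  proof
    have a: "\<forall>e\<in>square n. g e \<in> {1..k}" using L ij j' unfolding g_def in_L_def square_def by auto
    have b: "\<forall>i'<n. \<forall>j1<n. \<forall>j2<n. j1 \<noteq> j2 \<longrightarrow> g (i', j1) \<noteq> g (i', j2)"
    proof (intro allI impI)
      fix i' j1 j2 assume h: "i' < n" "j1 < n" "j2 < n" "j1 \<noteq> j2"
      show "g (i', j1) \<noteq> g (i', j2)"
      proof (cases "i' = i")
        case False then show ?thesis using L h unfolding g_def in_L_def by auto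
      next
        case True
        define sg where "sg x = (if x = j then j' else if x = j' then j else x)" for x
        have gs: "g (i, x) = f (i, sg x)" for x unfolding g_def sg_def using j' by auto
        have "sg j1 < n" "sg j2 < n" "sg j1 \<noteq> sg j2" using h ij j' unfolding sg_def by auto
        then show ?thesis using L h True gs unfolding in_L_def by metis
      qed
    qed
    have c: "\<forall>j'<n. \<forall>i1<n. \<forall>i2<n. i1 \<noteq> i2 \<longrightarrow> g (i1, j') \<noteq> g (i2, j')"
    proof (intro allI impI)
      fix j'' i1 i2 assume h: "j'' < n" "i1 < n" "i2 < n" "i1 \<noteq> i2"
      show "g (i1, j'') \<noteq> g (i2, j'')"
      proof (cases "j'' = j \<or> j'' = j'")
        case False then show ?thesis using L h unfolding g_def in_L_def by auto
      next
        case True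
        have fne: "f (i1, j'') \<noteq> f (i2, j'')" using L h unfolding in_L_def by blast
        show ?thesis
        proof (cases "i1 = i \<or> i2 = i")
          case False then show ?thesis using fne unfolding g_def by auto
        next
          case True
          then show ?thesis using \<open>j'' = j \<or> j'' = j'\<close> h n1 n2 j' unfolding g_def by auto
        qed
      qed
    qed
    show "in_L n k g" using a b c unfolding in_L_def by blast
    show "\<forall>e\<in>dom p. p e = Some (g e)" using ext ij j' unfolding is_extension_def g_def by auto
  qed
  moreover have "g (i,j) \<noteq> f (i,j)" using dif j' unfolding g_def by auto
  ultimately show ?thesis using diff_ext ext ij by (auto simp: square_def)
qed

lemma lower:
  assumes pc: "partial_coloring n (2*n-1) p" and cd: "card (square n - dom p) > n"
  shows "\<not> uniquely_extends n (2*n-1) p"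
proof
  assume ue: "uniquely_extends n (2*n-1) p"
  then obtain f where ext: "is_extension n (2*n-1) p f" unfolding uniquely_extends_def by blast
  define U where "U = square n - dom p"
  have fin: "finite U" unfolding U_def square_def by (rule finite_subset[of _ "{..<n} \<times> {..<n}"]) auto
  have "fst ` U \<subseteq> {..<n}" unfolding U_def square_def by auto
  then have "card (fst ` U) \<le> n" using card_mono[of "{..<n}" "fst ` U"] by simp
  then have "\<not> inj_on fst U" using cd card_image[of fst U] unfolding U_def by auto
  then obtain a b where ab: "a \<in> U" "b \<in> U" "a \<noteq> b" "fst a = fst b" unfolding inj_on_def by blast
  obtain i j j' where ij: "a = (i,j)" "b = (i,j')" using ab by (cases a, cases b) auto
  have h: "i < n" "j < n" "(i,j) \<notin> dom p" "j' < n" "j' \<noteq> j" "(i,j') \<notin> dom p"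
    using ab ij unfolding U_def square_def by auto
  show False
  proof (cases "\<exists>r<n. r \<noteq> i \<and> f (r,j) = f (i,j')")
    case True
    then obtain r where "r<n" "r \<noteq> i" "f (r,j) = f (i,j')" by blast
    then show False using recolor[OF ext h(1,2,3) _ _ h(4,5)] ue by auto
  next
    case F1: False
    show False
    proof (cases "\<exists>r<n. r \<noteq> i \<and> f (r,j') = f (i,j)")
      case True
      then obtain r where "r<n" "r \<noteq> i" "f (r,j') = f (i,j)" by blast
      then show False using recolor[OF ext h(1,4,6) _ _ h(2), of r] h(5) ue by auto
    next
      case False
      then show False using swap[OF ext h] F1 ue by auto
    qed
  qed
qed



definition dd :: "nat \<Rightarrow> nat \<Rightarrow> nat" where
  "dd N x = (if 2*x < N then 2*x else 2*x - N)"

definition mm :: "nat \<Rightarrow> nat \<Rightarrow> nat \<Rightarrow> nat" where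
  "mm n i j = (if i = n - 1 then dd (n-1) j else if j = n - 1 then dd (n-1) i
     else if i + j < n - 1 then i + j else i + j - (n - 1))"

lemma mm_sym: "mm n i j = mm n j i"
  unfolding mm_def by auto

lemma mm_lt: assumes "i < n" "j < n" "i \<noteq> j" shows "mm n i j < n - 1"
  using assms unfolding mm_def dd_def by auto

lemma dd_inj: assumes "N = 2*s+1" "x < N" "y < N" "dd N x = dd N y" shows "x = y"
proof (cases "2*x < N")
  case True
  show ?thesis
  proof (cases "2*y < N")
    case True then show ?thesis using \<open>2*x < N\<close> assms(4) unfolding dd_def by auto
  next
    case False
    then have "2*x + N = 2*y" using \<open>2*x < N\<close> assms(4) unfolding dd_def by auto
    then have eq: "2*(x+s) + 1 = 2*y" using assms(1) by simp
    have "odd (2*(x+s) + 1)" by simp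
    moreover have "even (2*y)" by simp
    ultimately show ?thesis using eq by metis
  qed
next
  case F: False
  show ?thesis
  proof (cases "2*y < N")
    case True
    then have "2*y + N = 2*x" using F assms(4) unfolding dd_def by auto
    then have eq: "2*(y+s) + 1 = 2*x" using assms(1) by simp
    have "odd (2*(y+s) + 1)" by simp
    moreover have "even (2*x)" by simp
    ultimately show ?thesis using eq by metis
  next
    case False then show ?thesis using F assms(4) unfolding dd_def by auto
  qed
qed

lemma mm_inj:
  assumes "even n" "i < n" "j1 < n" "j2 < n" "j1 \<noteq> i" "j2 \<noteq> i" "mm n i j1 = mm n i j2"
  shows "j1 = j2"
proof -
  obtain t where t: "n = 2*t" using assms(1) by blast
  have tp: "0 < t" using assms(2) t by simp
  define N where "N = n - 1"
  have N: "N = 2*(t-1)+1" unfolding N_def t using tp by simp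
  have e: "mm n i j = (if i = N then dd N j else if j = N then dd N i
     else if i + j < N then i + j else i + j - N)" for j unfolding mm_def N_def by simp
  have lt: "i \<le> N" "j1 \<le> N" "j2 \<le> N" using assms(2-4) unfolding N_def by auto
  show ?thesis
  proof (cases "i = N")
    case True
    then have "j1 < N" "j2 < N" using lt assms(5,6) by auto
    then show ?thesis using dd_inj[OF N] assms(7) True e by metis
  next
    case iN: False
    then have iN': "i < N" using lt by simp
    show ?thesis
    proof (cases "j1 = N")
      case True
      show ?thesis
      proof (cases "j2 = N")
        case True then show ?thesis using \<open>j1 = N\<close> by simp
      next
        case False
        then have "j2 < N" using lt by simp
        then show ?thesis using True assms(6,7) \<open>j2 < N\<close> iN' e[of j1] e[of j2] unfolding dd_def by (auto split: if_splits)
      qed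
    next
      case j1N: False
      show ?thesis
      proof (cases "j2 = N")
        case True
        then show ?thesis using j1N assms(5,7) iN' lt e[of j1] e[of j2] unfolding dd_def by (auto split: if_splits)
      next
        case False
        then show ?thesis using j1N iN' lt assms(7) e[of j1] e[of j2] by (auto split: if_splits)
      qed
    qed
  qed
qed

lemma val_inj:
  assumes "even n" "i < n" "j1 < n" "j2 < n" "j1 \<noteq> i" "j2 \<noteq> i"
    and "mm n i j1 + (if b1 then 1 else n) = mm n i j2 + (if b2 then 1 else n)"
  shows "b1 = b2 \<and> j1 = j2"
proof -
  have "mm n i j1 < n - 1" "mm n i j2 < n - 1" using mm_lt assms by auto
  then have "b1 = b2" using assms(7) by (auto split: if_splits)
  then show ?thesis using mm_inj[OF assms(1-6)] assms(7) by auto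
qed

definition cc :: "nat \<Rightarrow> nat \<Rightarrow> nat \<Rightarrow> nat" where
  "cc n i j = mm n i j + (if i < j then 1 else n)"

definition pp :: "nat \<Rightarrow> nat \<times> nat \<Rightarrow> nat option" where
  "pp n = (\<lambda>(i,j). if i < n \<and> j < n \<and> i \<noteq> j then Some (cc n i j) else None)"

definition ff :: "nat \<Rightarrow> nat \<times> nat \<Rightarrow> nat" where
  "ff n = (\<lambda>(i,j). if i = j then 2*n - 1 else cc n i j)"

lemma cc_rng: assumes "i < n" "j < n" "i \<noteq> j" shows "cc n i j \<in> {1..2*n-2}"
  using mm_lt[OF assms] unfolding cc_def by auto

lemma cc_col: "cc n j i = mm n i j + (if j < i then 1 else n)"
  unfolding cc_def using mm_sym by metis

lemma dom_pp: "dom (pp n) = {(i, j). i < n \<and> j < n \<and> i \<noteq> j}"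
  unfolding pp_def dom_def by (auto split: if_splits)

lemma pc_pp: "partial_coloring n (2*n-1) (pp n)"
  unfolding partial_coloring_def
proof
  show "dom (pp n) \<subseteq> square n" unfolding dom_pp square_def by auto
  show "ran (pp n) \<subseteq> {1..2*n-1}"
  proof
    fix v assume "v \<in> ran (pp n)"
    then obtain i j where "pp n (i,j) = Some v" unfolding ran_def by auto
    then have "i < n" "j < n" "i \<noteq> j" "v = cc n i j" unfolding pp_def by (auto split: if_splits)
    then show "v \<in> {1..2*n-1}" using cc_rng by fastforce
  qed
qed

lemma card_dom_pp: "card (dom (pp n)) = n^2 - n"
proof -
  have e: "dom (pp n) = ({..<n} \<times> {..<n}) - (\<lambda>i. (i,i)) ` {..<n}" unfolding dom_pp by auto
  have "card ((\<lambda>i. (i,i)) ` {..<n}) = n" by (subst card_image) (auto simp: inj_on_def)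
  then show ?thesis unfolding e by (subst card_Diff_subset) (auto simp: card_cartesian_product power2_eq_square)
qed

lemma ff_diag: "ff n (i,i) = 2*n-1" by (simp add: ff_def)
lemma ff_off: "i \<noteq> j \<Longrightarrow> ff n (i,j) = cc n i j" by (simp add: ff_def)
lemma ff_off_rng: "i < n \<Longrightarrow> j < n \<Longrightarrow> i \<noteq> j \<Longrightarrow> ff n (i,j) \<le> 2*n-2"
  using cc_rng[of i n j] ff_off[of i j n] by simp

lemma ff_L: assumes "even n" "0 < n" shows "in_L n (2*n-1) (ff n)"
  unfolding in_L_def
proof (intro conjI)
  show "\<forall>e\<in>square n. ff n e \<in> {1..2*n-1}"
  proof
    fix e assume "e \<in> square n"
    then obtain i j where e: "e = (i,j)" "i < n" "j < n" unfolding square_def by auto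
    show "ff n e \<in> {1..2*n-1}"
    proof (cases "i = j")
      case True then show ?thesis using e assms ff_diag by simp
    next
      case False then show ?thesis using e cc_rng[of i n j] ff_off[of i j n] by auto
    qed
  qed
  show "\<forall>i<n. \<forall>j<n. \<forall>j'<n. j \<noteq> j' \<longrightarrow> ff n (i, j) \<noteq> ff n (i, j')"
  proof (intro allI impI)
    fix i j j' assume h: "i < n" "j < n" "j' < n" "j \<noteq> j'"
    show "ff n (i, j) \<noteq> ff n (i, j')"
    proof (cases "i = j")
      case True then show ?thesis using ff_diag[of n i] ff_off_rng[of i n j'] h assms by auto
    next
      case F: False
      show ?thesis
      proof (cases "i = j'")
        case True then show ?thesis using ff_diag[of n i] ff_off_rng[of i n j] h assms F by auto
      next
        case False
        have "mm n i j + (if i < j then 1 else n) \<noteq> mm n i j' + (if i < j' then 1 else n)"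
          using val_inj[OF assms(1) h(1,2,3), of "i < j" "i < j'"] h F False by auto
        then show ?thesis using ff_off[of i j n] ff_off[of i j' n] F False unfolding cc_def by simp
      qed
    qed
  qed
  show "\<forall>j<n. \<forall>i<n. \<forall>i'<n. i \<noteq> i' \<longrightarrow> ff n (i, j) \<noteq> ff n (i', j)"
  proof (intro allI impI)
    fix j i i' assume h: "j < n" "i < n" "i' < n" "i \<noteq> i'"
    show "ff n (i, j) \<noteq> ff n (i', j)"
    proof (cases "i = j")
      case True then show ?thesis using ff_diag[of n i] ff_off_rng[of i' n j] h assms by auto
    next
      case F: False
      show ?thesis
      proof (cases "i' = j")
        case True then show ?thesis using ff_diag[of n i'] ff_off_rng[of i n j] h assms F by auto
      next
        case False
        have "mm n j i + (if i < j then 1 else n) \<noteq> mm n j i' + (if i' < j then 1 else n)"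
          using val_inj[OF assms(1) h(1,2,3), of "i < j" "i' < j"] h F False by auto
        then show ?thesis using ff_off[of i j n] ff_off[of i' j n] cc_col[of n i j] cc_col[of n i' j] F False
          by simp
      qed
    qed
  qed
qed

lemma ue_pp: assumes "even n" "0 < n" shows "uniquely_extends n (2*n-1) (pp n)"
  unfolding uniquely_extends_def
proof (intro exI conjI allI impI ballI)
  show ext: "is_extension n (2*n-1) (pp n) (ff n)"
    unfolding is_extension_def
  proof
    show "in_L n (2*n-1) (ff n)" by (rule ff_L[OF assms])
    show "\<forall>e\<in>dom (pp n). pp n e = Some (ff n e)"
    proof
      fix e assume "e \<in> dom (pp n)"
      then obtain a b where "e = (a,b)" "a < n" "b < n" "a \<noteq> b" unfolding dom_pp by auto
      then show "pp n e = Some (ff n e)" unfolding pp_def ff_def by simp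
    qed
  qed
  fix g e assume g: "is_extension n (2*n-1) (pp n) g" and e: "e \<in> square n"
  obtain i j where ij: "e = (i,j)" "i < n" "j < n" using e unfolding square_def by auto
  have off: "g (a,b) = cc n a b" if "a < n" "b < n" "a \<noteq> b" for a b
  proof -
    have "(a,b) \<in> dom (pp n)" unfolding dom_pp using that by auto
    then have "pp n (a,b) = Some (g (a,b))" using g unfolding is_extension_def by blast
    then show ?thesis using that unfolding pp_def by auto
  qed
  show "g e = ff n e"
  proof (cases "i = j")
    case False then show ?thesis using off ij unfolding ff_def by auto
  next
    case True
    define D where "D = {..<n} - {i}"
    define A where "A = (\<lambda>j. cc n i j) ` D"
    define B where "B = (\<lambda>j. cc n j i) ` D"
    have cD: "card D = n - 1" unfolding D_def using ij by (subst card_Diff_subset) auto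
    have "inj_on (\<lambda>j. cc n i j) D" unfolding inj_on_def D_def
      using val_inj[OF assms(1) ij(2)] unfolding cc_def by blast
    then have cA: "card A = n - 1" unfolding A_def using cD card_image by metis
    have "inj_on (\<lambda>j. cc n j i) D" unfolding inj_on_def D_def
      using val_inj[OF assms(1) ij(2)] unfolding cc_col by blast
    then have cB: "card B = n - 1" unfolding B_def using cD card_image by metis
    have disj: "A \<inter> B = {}"
    proof -
      have "cc n i j1 \<noteq> cc n j2 i" if "j1 \<in> D" "j2 \<in> D" for j1 j2
      proof
        assume "cc n i j1 = cc n j2 i"
        moreover have "cc n i j1 = mm n i j1 + (if i < j1 then 1 else n)" by (simp add: cc_def)
        moreover have "cc n j2 i = mm n i j2 + (if j2 < i then 1 else n)" by (rule cc_col)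
        ultimately have "(i < j1) = (j2 < i) \<and> j1 = j2"
          using val_inj[OF assms(1) ij(2), of j1 j2 "i < j1" "j2 < i"] that
          unfolding D_def by auto
        then show False using that unfolding D_def by auto
      qed
      then show ?thesis unfolding A_def B_def by blast
    qed
    have sub: "A \<union> B \<subseteq> {1..2*n-2}"
    proof -
      have "cc n i x \<in> {1..2*n-2} \<and> cc n x i \<in> {1..2*n-2}" if "x \<in> D" for x
        using cc_rng[of i n x] cc_rng[of x n i] ij that unfolding D_def by auto
      then show ?thesis unfolding A_def B_def by auto
    qed
    have fD: "finite D" unfolding D_def by simp
    have "card (A \<union> B) = card A + card B"
      by (rule card_Un_disjoint) (use fD disj in \<open>auto simp: A_def B_def\<close>)
    then have "card (A \<union> B) = card {1..2*n-2}" using cA cB assms by simp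
    then have AB: "A \<union> B = {1..2*n-2}" using card_subset_eq[OF _ sub] by auto
    have gr: "g (i,i) \<in> {1..2*n-1}" using g ij unfolding is_extension_def in_L_def square_def by auto
    have "g (i,i) \<notin> A"
    proof
      assume "g (i,i) \<in> A"
      then obtain j' where "j' \<in> D" "g (i,i) = cc n i j'" unfolding A_def by auto
      then have "g (i,i) = g (i,j')" "j' < n" "j' \<noteq> i" using off ij unfolding D_def by auto
      moreover have "in_L n (2*n-1) g" using g unfolding is_extension_def by blast
      ultimately show False using ij unfolding in_L_def by (metis True)
    qed
    moreover have "g (i,i) \<notin> B"
    proof
      assume "g (i,i) \<in> B"
      then obtain j' where "j' \<in> D" "g (i,i) = cc n j' i" unfolding B_def by auto
      then have "g (i,i) = g (j',i)" "j' < n" "j' \<noteq> i" using off ij unfolding D_def by auto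
      moreover have "in_L n (2*n-1) g" using g unfolding is_extension_def by blast
      ultimately show False using ij unfolding in_L_def by (metis True)
    qed
    ultimately have "g (i,i) = 2*n-1" using gr AB by auto
    then show ?thesis using ij True unfolding ff_def by auto
  qed
qed


lemma square_eq: "square n = {..<n} \<times> {..<n}" unfolding square_def by auto

lemma card_square: "card (square n) = n * n" unfolding square_eq by (simp add: card_cartesian_product)

theorem mainTheorem4:
  fixes n :: nat
  assumes "even n" and "0 < n"
  shows "defining_number n (2 * n - 1) = n ^ 2 - n
       \<and> (\<exists>p. partial_coloring n (2 * n - 1) p
              \<and> dom p = {(i, j). i < n \<and> j < n \<and> i \<noteq> j}
              \<and> card (dom p) = n ^ 2 - n
              \<and> uniquely_extends n (2 * n - 1) p)
       \<and> (\<forall>p. partial_coloring n (2 * n - 1) p \<and> card (square n - dom p) > n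
              \<longrightarrow> \<not> uniquely_extends n (2 * n - 1) p)"
proof (intro conjI)
  show low: "\<forall>p. partial_coloring n (2 * n - 1) p \<and> card (square n - dom p) > n
              \<longrightarrow> \<not> uniquely_extends n (2 * n - 1) p" using lower by blast
  show "\<exists>p. partial_coloring n (2 * n - 1) p
              \<and> dom p = {(i, j). i < n \<and> j < n \<and> i \<noteq> j}
              \<and> card (dom p) = n ^ 2 - n
              \<and> uniquely_extends n (2 * n - 1) p"
    using pc_pp dom_pp card_dom_pp ue_pp[OF assms] by blast
  define T where "T = (\<lambda>p. card (dom p)) ` {p. partial_coloring n (2*n-1) p \<and> uniquely_extends n (2*n-1) p}"
  have fs: "finite (square n)" unfolding square_eq by simp
  have mem: "n^2 - n \<in> T" unfolding T_def
    using pc_pp[of n] card_dom_pp[of n] ue_pp[OF assms] by (metis (mono_tags, lifting) image_eqI mem_Collect_eq)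
  have lb: "n^2 - n \<le> x" if "x \<in> T" for x
  proof -
    obtain p where p: "partial_coloring n (2*n-1) p" "uniquely_extends n (2*n-1) p" "x = card (dom p)"
      using \<open>x \<in> T\<close> unfolding T_def by auto
    have sub: "dom p \<subseteq> square n" using p(1) unfolding partial_coloring_def by blast
    have "\<not> card (square n - dom p) > n" using low p by blast
    moreover have "card (square n - dom p) = n * n - card (dom p)"
      using card_Diff_subset[OF finite_subset[OF sub fs] sub] card_square by simp
    ultimately show ?thesis using p(3) by (simp add: power2_eq_square)
  qed
  have ub: "x \<le> n * n" if "x \<in> T" for x
  proof -
    obtain p where p: "partial_coloring n (2*n-1) p" "x = card (dom p)"
      using \<open>x \<in> T\<close> unfolding T_def by auto
    have sub: "dom p \<subseteq> square n" using p(1) unfolding partial_coloring_def by blast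
    show ?thesis using card_mono[OF fs sub] card_square p(2) by simp
  qed
  have fT: "finite T" using ub by (meson finite_atMost finite_subset atMost_iff subsetI)
  have "Min T = n^2 - n" using Min_eqI[OF fT lb mem] .
  then show "defining_number n (2 * n - 1) = n ^ 2 - n" unfolding defining_number_def T_def by simp
qed

end
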